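(* The homotopy $H:\mathcal{T}^c(M)\to\mathcal{T}^c(M)$ maps the sub-$\mathbb{S}$-module $\mathcal{G}^{¡}\subset\mathcal{T}^c(M)$ into itself.
   Context: $M$ is spanned by arity-2 elements $\mu$ (degree 1) and $\beta$ (degree 2), trivial $\mathbb{S}_2$-action. The Gerstenhaber operad is $\mathcal{G}=\mathcal{T}(s^{-1}M)/(R)$ with $s^{-1}\mu=\bullet$ (commutative associative product) and $s^{-1}\beta=\langle\,,\rangle$ (degree-1 Lie bracket), with Leibniz compatibility. Its Koszul dual cooperad $\mathcal{G}^{¡}$ is the intersection of $\mathcal{T}^c(M)\subset\mathcal{T}^c(s\overline{\mathcal{G}})$ with the kernel of the coderivation $d_2$ of the bar construction induced by infinitesimal composition in $\mathcal G$. $H$ is defined as follows: for a binary tree and vertex $v$, $\omega(v)=m_vn_v$ where $m_v,n_v$ are the numbers of leaves above the two inputs of $v$; $h:M\to M$ sends $\beta\mapsto\mu,\mu\mapsto0$; $H$ sends a decorated tree with $n$ vertices to $\sum_v\frac{\omega(v)}{\binom{n+1}{2}}$ times the tree with $h$ applied at $v$ (Koszul sign, vertices ordered via the planar representation). *)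

theory Defs
  imports Main
begin

text \<open>Decorations: Mu = mu (degree 1), Be = beta (degree 2), trivial S2-action.\<close>
datatype dec = Mu | Be

datatype tree = Lf nat | Nd dec tree tree

fun dg :: "dec \<Rightarrow> nat" where
  "dg Mu = 1" | "dg Be = 2"

fun tdeg :: "tree \<Rightarrow> nat" where
  "tdeg (Lf i) = 0"
| "tdeg (Nd d l r) = dg d + tdeg l + tdeg r"

fun leaves :: "tree \<Rightarrow> nat list" where
  "leaves (Lf i) = [i]"
| "leaves (Nd d l r) = leaves l @ leaves r"

fun nverts :: "tree \<Rightarrow> nat" where
  "nverts (Lf i) = 0"
| "nverts (Nd d l r) = Suc (nverts l + nverts r)"

definition arity_tree :: "nat \<Rightarrow> tree \<Rightarrow> bool" where
  "arity_tree n t \<longleftrightarrow> distinct (leaves t) \<and> set (leaves t) = {1..n}"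

datatype ctx = Hole | CL dec ctx tree | CR dec tree ctx

fun plug :: "ctx \<Rightarrow> tree \<Rightarrow> tree" where
  "plug Hole s = s"
| "plug (CL d C r) s = Nd d (plug C s) r"
| "plug (CR d l C) s = Nd d l (plug C s)"

text \<open>Total degree of the vertices preceding the hole in the planar (preorder) ordering.\<close>
fun pre_deg :: "ctx \<Rightarrow> nat" where
  "pre_deg Hole = 0"
| "pre_deg (CL d C r) = dg d + pre_deg C"
| "pre_deg (CR d l C) = dg d + tdeg l + pre_deg C"

fun decomps :: "tree \<Rightarrow> (ctx \<times> dec \<times> tree \<times> tree) list" where
  "decomps (Lf i) = []"
| "decomps (Nd d l r) = (Hole, d, l, r)
     # map (\<lambda>(C, e, a, b). (CL d C r, e, a, b)) (decomps l)
     @ map (\<lambda>(C, e, a, b). (CR d l C, e, a, b)) (decomps r)"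

text \<open>An element of T^c(M)(n) is given by its coefficients on planar representatives;
  the planar monomial of a tree is the tensor of its vertex decorations in preorder,
  so swapping the two subtrees at a vertex costs the Koszul sign (-1)^(|l||r|).\<close>
definition TcM :: "nat \<Rightarrow> (tree \<Rightarrow> 'a::field_char_0) set" where
  "TcM n = {c. (\<forall>t. \<not> arity_tree n t \<longrightarrow> c t = 0) \<and>
      (\<forall>C d l r. c (plug C (Nd d r l)) = (-1) ^ (tdeg l * tdeg r) * c (plug C (Nd d l r)))}"

text \<open>H(t) = sum over vertices v of omega(v)/binom(#vertices+1,2) times t with h applied at v,
  with h(beta) = mu, h(mu) = 0 and Koszul sign (-1)^(degrees of vertices before v).
  Written as the coefficient of a planar tree t in H(c).\<close>
definition Hop :: "(tree \<Rightarrow> 'a::field_char_0) \<Rightarrow> tree \<Rightarrow> 'a" where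
  "Hop c t = sum_list (map (\<lambda>(C, d, l, r).
      if d = Mu then
        of_nat (length (leaves l) * length (leaves r)) / of_nat (Suc (nverts t) choose 2)
        * (-1) ^ pre_deg C * c (plug C (Nd Be l r))
      else 0) (decomps t))"

text \<open>T(s^{-1}M)(3) has basis e(k,u,w) = the tree u(w(i,j),k) with {i,j,k}={1,2,3}, i<j,
  decorations u (root) and w (upper vertex); vectors are functions nat => dec => dec => 'a
  supported on k in {1,2,3}.\<close>
definition e3 :: "nat \<Rightarrow> dec \<Rightarrow> dec \<Rightarrow> nat \<Rightarrow> dec \<Rightarrow> dec \<Rightarrow> 'a::field_char_0" where
  "e3 k u w = (\<lambda>k' u' w'. if k' = k \<and> u' = u \<and> w' = w then 1 else 0)"

text \<open>R(3): associativity of the product (2 relations), Jacobi for the degree-1 bracket,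
  and the three Leibniz relations  <x_i . x_j, x_k> = x_i . <x_j,x_k> + <x_i,x_k> . x_j.\<close>
definition R3 :: "(nat \<Rightarrow> dec \<Rightarrow> dec \<Rightarrow> 'a::field_char_0) set" where
  "R3 = {v. \<exists>a1 a2 j l1 l2 l3.
     v = (\<lambda>k u w.
        a1 * e3 3 Mu Mu k u w - a1 * e3 1 Mu Mu k u w
      + a2 * e3 1 Mu Mu k u w - a2 * e3 2 Mu Mu k u w
      + j * (e3 1 Be Be k u w + e3 2 Be Be k u w + e3 3 Be Be k u w)
      + l1 * (e3 1 Be Mu k u w - e3 2 Mu Be k u w - e3 3 Mu Be k u w)
      + l2 * (e3 2 Be Mu k u w - e3 1 Mu Be k u w - e3 3 Mu Be k u w)
      + l3 * (e3 3 Be Mu k u w - e3 1 Mu Be k u w - e3 2 Mu Be k u w))}"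

text \<open>Sign of s u' (x) s w' |-> s(u' o w'): (-1)^|u'| with |u'| = dg u - 1.\<close>
definition susp_sign :: "dec \<Rightarrow> 'a::field_char_0" where
  "susp_sign u = (-1) ^ (dg u + 1)"

text \<open>The component of d_2(c) at the target tree obtained by plugging into context C a ternary
  vertex with (planar) inputs A, B, D; it is a vector of T(s^{-1}M)(3), and d_2(c) has zero
  component there iff this vector lies in R(3).  The three summands come from contracting
  the internal edge of u(w(A,B),D), u(A,w(B,D)), u(w(A,D),B), with Koszul signs.\<close>
definition d2_local :: "(tree \<Rightarrow> 'a::field_char_0) \<Rightarrow> ctx \<Rightarrow> tree \<Rightarrow> tree \<Rightarrow> tree
    \<Rightarrow> nat \<Rightarrow> dec \<Rightarrow> dec \<Rightarrow> 'a" where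
  "d2_local c C A B D k u w =
     (if k = 3 then susp_sign u * c (plug C (Nd u (Nd w A B) D))
      else if k = 1 then susp_sign u * (-1) ^ (dg w * tdeg A) * c (plug C (Nd u A (Nd w B D)))
      else if k = 2 then susp_sign u * (-1) ^ (tdeg B * tdeg D) * c (plug C (Nd u (Nd w A D) B))
      else 0)"

definition Gdual :: "nat \<Rightarrow> (tree \<Rightarrow> 'a::field_char_0) set" where
  "Gdual n = {c \<in> TcM n. \<forall>C A B D. d2_local c C A B D \<in> R3}"

end

theory Submission
  imports Defs
begin


definition hs_term :: "(tree \<Rightarrow> 'a::field_char_0) \<Rightarrow> ctx \<times> dec \<times> tree \<times> tree \<Rightarrow> 'a" where
  "hs_term \<phi> x = (case x of (C, d, l, r) \<Rightarrow> if d = Mu then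
      of_nat (length (leaves l) * length (leaves r)) * (-1) ^ pre_deg C * \<phi> (plug C (Nd Be l r))
      else 0)"

definition HS :: "(tree \<Rightarrow> 'a::field_char_0) \<Rightarrow> tree \<Rightarrow> 'a" where
  "HS \<phi> t = sum_list (map (hs_term \<phi>) (decomps t))"

lemma sum_list_div: "sum_list (map (\<lambda>x. f x / (c::'a::field)) xs) = sum_list (map f xs) / c"
  by (induction xs) (simp_all add: add_divide_distrib)

lemma Hop_HS: "Hop c t = HS c t / of_nat (Suc (nverts t) choose 2)"
proof -
  have "Hop c t = sum_list (map (\<lambda>x. hs_term c x / of_nat (Suc (nverts t) choose 2)) (decomps t))"
    unfolding Hop_def hs_term_def
    by (intro arg_cong[where f=sum_list] map_cong refl) (auto simp: algebra_simps)
  also have "\<dots> = HS c t / of_nat (Suc (nverts t) choose 2)"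
    unfolding HS_def by (simp add: sum_list_div)
  finally show ?thesis .
qed

lemma HS_Lf[simp]: "HS \<phi> (Lf i) = 0" by (simp add: HS_def)

lemma hs_term_CL: "hs_term \<phi> (CL d C r, y) = (-1) ^ dg d * hs_term (\<lambda>t. \<phi> (Nd d t r)) (C, y)"
  by (cases y) (auto simp: hs_term_def power_add)
lemma hs_term_CR: "hs_term \<phi> (CR d l C, y) = (-1) ^ (dg d + tdeg l) * hs_term (\<lambda>t. \<phi> (Nd d l t)) (C, y)"
  by (cases y) (auto simp: hs_term_def power_add)

lemma hs_term_Hole: "hs_term \<phi> (Hole, d, l, r) = (if d = Mu then of_nat (length (leaves l) * length (leaves r)) * \<phi> (Nd Be l r) else 0)"
  by (simp add: hs_term_def)

lemma HS_Nd: "HS \<phi> (Nd d l r) = (if d = Mu then of_nat (length (leaves l) * length (leaves r)) * \<phi> (Nd Be l r) else 0)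
   + (-1) ^ dg d * HS (\<lambda>t. \<phi> (Nd d t r)) l + (-1) ^ (dg d + tdeg l) * HS (\<lambda>t. \<phi> (Nd d l t)) r"
proof -
  have 1: "map (hs_term \<phi>) (map (\<lambda>(C, e, a, b). (CL d C r, e, a, b)) xs)
      = map (\<lambda>x. (-1) ^ dg d * hs_term (\<lambda>t. \<phi> (Nd d t r)) x) xs" for xs
    by (auto simp: hs_term_CL)
  have 2: "map (hs_term \<phi>) (map (\<lambda>(C, e, a, b). (CR d l C, e, a, b)) xs)
      = map (\<lambda>x. (-1) ^ (dg d + tdeg l) * hs_term (\<lambda>t. \<phi> (Nd d l t)) x) xs" for xs
    by (auto simp: hs_term_CR)
  show ?thesis unfolding HS_def
    by (simp only: decomps.simps list.map map_append 1 2 sum_list_append sum_list.Cons sum_list_const_mult)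
       (simp add: hs_term_Hole)
qed

fun HC :: "(tree \<Rightarrow> 'a::field_char_0) \<Rightarrow> ctx \<Rightarrow> tree \<Rightarrow> 'a" where
  "HC \<phi> Hole s = 0"
| "HC \<phi> (CL d C r) s = (if d = Mu then of_nat (length (leaves (plug C s)) * length (leaves r)) * \<phi> (Nd Be (plug C s) r) else 0)
     + (-1) ^ dg d * HC (\<lambda>t. \<phi> (Nd d t r)) C s + (-1) ^ (dg d + tdeg (plug C s)) * HS (\<lambda>t. \<phi> (Nd d (plug C s) t)) r"
| "HC \<phi> (CR d l C) s = (if d = Mu then of_nat (length (leaves l) * length (leaves (plug C s))) * \<phi> (Nd Be l (plug C s)) else 0)
     + (-1) ^ dg d * HS (\<lambda>t. \<phi> (Nd d t (plug C s))) l + (-1) ^ (dg d + tdeg l) * HC (\<lambda>t. \<phi> (Nd d l t)) C s"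

lemma HS_plug: "HS \<phi> (plug C s) = HC \<phi> C s + (-1) ^ pre_deg C * HS (\<lambda>t. \<phi> (plug C t)) s"
  by (induction C arbitrary: \<phi>) (simp_all add: HS_Nd power_add algebra_simps)

fun ctdeg :: "ctx \<Rightarrow> nat" where
  "ctdeg Hole = 0" | "ctdeg (CL d C r) = dg d + ctdeg C + tdeg r" | "ctdeg (CR d l C) = dg d + tdeg l + ctdeg C"
fun cnv :: "ctx \<Rightarrow> nat" where
  "cnv Hole = 0" | "cnv (CL d C r) = Suc (cnv C + nverts r)" | "cnv (CR d l C) = Suc (nverts l + cnv C)"
fun clv :: "ctx \<Rightarrow> nat" where
  "clv Hole = 0" | "clv (CL d C r) = clv C + length (leaves r)" | "clv (CR d l C) = length (leaves l) + clv C"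

lemma tdeg_plug: "tdeg (plug C s) = ctdeg C + tdeg s" by (induction C) auto
lemma nverts_plug: "nverts (plug C s) = cnv C + nverts s" by (induction C) auto
lemma len_plug: "length (leaves (plug C s)) = clv C + length (leaves s)" by (induction C) auto

lemma decomps_mem: "(C, d, l, r) \<in> set (decomps t) \<Longrightarrow> t = plug C (Nd d l r)"
  by (induction t arbitrary: C) auto

lemma decomps_tdeg: "(C, Mu, l, r) \<in> set (decomps t) \<Longrightarrow> tdeg (plug C (Nd Be l r)) = Suc (tdeg t)"
  by (drule decomps_mem) (simp add: tdeg_plug)

lemma HS_cong: "(\<And>C l r. (C, Mu, l, r) \<in> set (decomps t) \<Longrightarrow> \<phi> (plug C (Nd Be l r)) = \<psi> (plug C (Nd Be l r)))
   \<Longrightarrow> HS \<phi> t = HS \<psi> t"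
  unfolding HS_def hs_term_def
  by (intro arg_cong[where f=sum_list] map_cong refl) auto

lemma HS_scale: "HS (\<lambda>t. a * \<phi> t) t = a * HS \<phi> t"
  unfolding HS_def hs_term_def sum_list_const_mult[symmetric]
  by (intro arg_cong[where f=sum_list] map_cong refl) (auto simp: algebra_simps)

definition r3v :: "'a \<Rightarrow> 'a \<Rightarrow> 'a \<Rightarrow> 'a \<Rightarrow> 'a \<Rightarrow> 'a \<Rightarrow> nat \<Rightarrow> dec \<Rightarrow> dec \<Rightarrow> 'a::field_char_0" where
  "r3v a1 a2 j l1 l2 l3 = (\<lambda>k u w.
        a1 * e3 3 Mu Mu k u w - a1 * e3 1 Mu Mu k u w
      + a2 * e3 1 Mu Mu k u w - a2 * e3 2 Mu Mu k u w
      + j * (e3 1 Be Be k u w + e3 2 Be Be k u w + e3 3 Be Be k u w)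
      + l1 * (e3 1 Be Mu k u w - e3 2 Mu Be k u w - e3 3 Mu Be k u w)
      + l2 * (e3 2 Be Mu k u w - e3 1 Mu Be k u w - e3 3 Mu Be k u w)
      + l3 * (e3 3 Be Mu k u w - e3 1 Mu Be k u w - e3 2 Mu Be k u w))"

lemma R3_iff: "v \<in> R3 \<longleftrightarrow> (\<exists>a1 a2 j l1 l2 l3. v = r3v a1 a2 j l1 l2 l3)"
  unfolding R3_def r3v_def by simp

lemma R3_add: "v \<in> R3 \<Longrightarrow> v' \<in> R3 \<Longrightarrow> (\<lambda>k u x. v k u x + v' k u x) \<in> R3"
proof -
  assume "v \<in> R3" "v' \<in> R3"
  then obtain a1 a2 j l1 l2 l3 b1 b2 i m1 m2 m3 where
    "v = r3v a1 a2 j l1 l2 l3" "v' = r3v b1 b2 i m1 m2 m3" unfolding R3_iff by blast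
  then have "(\<lambda>k u x. v k u x + v' k u x) = r3v (a1+b1) (a2+b2) (j+i) (l1+m1) (l2+m2) (l3+m3)"
    by (auto simp: r3v_def algebra_simps)
  then show ?thesis unfolding R3_iff by blast
qed

lemma R3_scale: "v \<in> R3 \<Longrightarrow> (\<lambda>k u x. a * v k u x) \<in> R3"
  unfolding R3_iff
  apply (elim exE)
  subgoal for a1 a2 j l1 l2 l3
    by (rule exI[of _ "a*a1"], rule exI[of _ "a*a2"], rule exI[of _ "a*j"], rule exI[of _ "a*l1"],
        rule exI[of _ "a*l2"], rule exI[of _ "a*l3"]) (auto simp: r3v_def algebra_simps)
  done

lemma R3_zero: "(\<lambda>k u x. 0) \<in> R3"
  unfolding R3_iff
  by (rule exI[of _ 0])+ (auto simp: r3v_def)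

lemma R3_sigma: "v \<in> R3 \<Longrightarrow> (\<lambda>k u x. (-1) ^ (dg u + dg x) * v k u x) \<in> R3"
  unfolding R3_iff
  apply (elim exE)
  subgoal for a1 a2 j l1 l2 l3
    apply (rule exI[of _ "a1"], rule exI[of _ "a2"], rule exI[of _ "j"], rule exI[of _ "-l1"],
        rule exI[of _ "-l2"], rule exI[of _ "-l3"])
    apply (rule ext)+
    subgoal for k u x by (cases u; cases x) (auto simp: r3v_def e3_def)
    done
  done

lemma R3_sum_list: "(\<And>y. y \<in> set ys \<Longrightarrow> (\<lambda>k u x. G y k u x) \<in> R3)
   \<Longrightarrow> (\<lambda>k u x. sum_list (map (\<lambda>y. G y k u x) ys)) \<in> R3"
proof (induction ys)
  case Nil then show ?case using R3_zero by simp
next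
  case (Cons a ys) then show ?case using R3_add[of "\<lambda>k u x. G a k u x"] by simp
qed

lemma HS_vec: "(\<And>C l r. (C, Mu, l, r) \<in> set (decomps t) \<Longrightarrow> (\<lambda>k u x. F k u x (plug C (Nd Be l r))) \<in> R3)
   \<Longrightarrow> (\<lambda>k u x. HS (F k u x) t) \<in> R3"
  unfolding HS_def
proof (rule R3_sum_list)
  fix y assume H: "\<And>C l r. (C, Mu, l, r) \<in> set (decomps t) \<Longrightarrow> (\<lambda>k u x. F k u x (plug C (Nd Be l r))) \<in> R3"
    and y: "y \<in> set (decomps t)"
  obtain C d l r where yy: "y = (C, d, l, r)" by (cases y) auto
  show "(\<lambda>k u x. hs_term (F k u x) y) \<in> R3"
  proof (cases "d = Mu")
    case True
    have e: "(\<lambda>k u x. hs_term (F k u x) y) = (\<lambda>k u x. (of_nat (length (leaves l) * length (leaves r)) * (-1) ^ pre_deg C) * F k u x (plug C (Nd Be l r)))"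
      by (simp add: yy True hs_term_def mult.assoc)
    show ?thesis unfolding e by (rule R3_scale, rule H) (use y yy True in simp)
  next
    case False
    then show ?thesis using R3_zero yy by (simp add: hs_term_def)
  qed
qed

lemma m1sq: "(-1::'a::ring_1) ^ n * (-1) ^ n = 1"
  by (induction n) (auto simp: algebra_simps)

fun ccomp :: "ctx \<Rightarrow> ctx \<Rightarrow> ctx" where
  "ccomp Hole D = D" | "ccomp (CL d C r) D = CL d (ccomp C D) r" | "ccomp (CR d l C) D = CR d l (ccomp C D)"
lemma plug_ccomp: "plug C (plug D t) = plug (ccomp C D) t" by (induction C) auto

lemma leaves_plug_dec: "leaves (plug C (Nd d l r)) = leaves (plug C (Nd d' l r))" by (induction C) auto

lemma HS_zero: "(\<And>t. \<phi> t = 0) \<Longrightarrow> HS \<phi> t = 0"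
proof -
  assume z: "\<And>t. \<phi> t = 0"
  have "HS \<phi> t = HS (\<lambda>t. 0 * \<phi> t) t" by (rule HS_cong) (simp add: z)
  then show ?thesis using HS_scale[of 0 \<phi> t] by simp
qed

lemma alg3: "(if P then n * (k * x) else 0) + p * (k * y) + q * (k * z) = (k::'a::field) * ((if P then n * x else 0) + p * y + q * z)"
  by (cases P) (simp_all add: algebra_simps)

lemma HC_rel: "length (leaves s1) = length (leaves s2) \<Longrightarrow> tdeg s1 = tdeg s2 \<Longrightarrow>
   (\<And>C'. \<phi> (plug C' s1) = \<kappa> * \<phi> (plug C' s2)) \<Longrightarrow> HC \<phi> C s1 = \<kappa> * HC \<phi> C s2"
proof (induction C arbitrary: \<phi>)
  case Hole then show ?case by simp
next
  case (CL d C r)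
  have a: "\<phi> (Nd Be (plug C s1) r) = \<kappa> * \<phi> (Nd Be (plug C s2) r)" using CL.prems(3)[of "CL Be C r"] by simp
  have b: "HC (\<lambda>t. \<phi> (Nd d t r)) C s1 = \<kappa> * HC (\<lambda>t. \<phi> (Nd d t r)) C s2"
    by (rule CL.IH[OF CL.prems(1,2)]) (use CL.prems(3)[of "CL d _ r"] in simp)
  have c: "HS (\<lambda>t. \<phi> (Nd d (plug C s1) t)) r = \<kappa> * HS (\<lambda>t. \<phi> (Nd d (plug C s2) t)) r"
    by (subst HS_scale[symmetric], rule HS_cong) (use CL.prems(3)[of "CL d C _"] in simp)
  have l: "length (leaves (plug C s1)) = length (leaves (plug C s2))" "tdeg (plug C s1) = tdeg (plug C s2)"
    using CL.prems(1,2) by (simp_all add: len_plug tdeg_plug)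
  show ?case unfolding HC.simps a b c l by (rule alg3)
next
  case (CR d l C)
  have a: "\<phi> (Nd Be l (plug C s1)) = \<kappa> * \<phi> (Nd Be l (plug C s2))" using CR.prems(3)[of "CR Be l C"] by simp
  have b: "HC (\<lambda>t. \<phi> (Nd d l t)) C s1 = \<kappa> * HC (\<lambda>t. \<phi> (Nd d l t)) C s2"
    by (rule CR.IH[OF CR.prems(1,2)]) (use CR.prems(3)[of "CR d l _"] in simp)
  have c: "HS (\<lambda>t. \<phi> (Nd d t (plug C s1))) l = \<kappa> * HS (\<lambda>t. \<phi> (Nd d t (plug C s2))) l"
    by (subst HS_scale[symmetric], rule HS_cong) (use CR.prems(3)[of "CR d _ C"] in simp)
  have l: "length (leaves (plug C s1)) = length (leaves (plug C s2))"
    using CR.prems(1,2) by (simp_all add: len_plug tdeg_plug)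
  show ?case unfolding HC.simps a b c l by (rule alg3)
qed

definition SW :: "(tree \<Rightarrow> 'a::field_char_0) \<Rightarrow> bool" where
  "SW c \<longleftrightarrow> (\<forall>C d l r. c (plug C (Nd d r l)) = (-1) ^ (tdeg l * tdeg r) * c (plug C (Nd d l r)))"

lemma HS_swap:
  assumes "SW \<psi>"
  shows "HS \<psi> (Nd d r l) = (-1) ^ (tdeg l * tdeg r) * HS \<psi> (Nd d l r)"
proof -
  have sw: "\<And>C d l r. \<psi> (plug C (Nd d r l)) = (-1) ^ (tdeg l * tdeg r) * \<psi> (plug C (Nd d l r))"
    using assms unfolding SW_def by blast
  have a: "\<psi> (Nd Be r l) = (-1) ^ (tdeg l * tdeg r) * \<psi> (Nd Be l r)" using sw[of Hole Be r l] by simp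
  have b: "HS (\<lambda>t. \<psi> (Nd d t l)) r = (-1) ^ (tdeg l * tdeg r) * (-1) ^ tdeg l * HS (\<lambda>t. \<psi> (Nd d l t)) r"
  proof (subst HS_scale[symmetric], rule HS_cong)
    fix C x y assume "(C, Mu, x, y) \<in> set (decomps r)"
    then have "tdeg (plug C (Nd Be x y)) = Suc (tdeg r)" by (rule decomps_tdeg)
    then show "\<psi> (Nd d (plug C (Nd Be x y)) l) = (-1) ^ (tdeg l * tdeg r) * (-1) ^ tdeg l * \<psi> (Nd d l (plug C (Nd Be x y)))"
      using sw[of Hole d "plug C (Nd Be x y)" l] by (simp add: power_add mult_ac)
  qed
  have c: "HS (\<lambda>t. \<psi> (Nd d r t)) l = (-1) ^ (tdeg l * tdeg r) * (-1) ^ tdeg r * HS (\<lambda>t. \<psi> (Nd d t r)) l"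
  proof (subst HS_scale[symmetric], rule HS_cong)
    fix C x y assume "(C, Mu, x, y) \<in> set (decomps l)"
    then have "tdeg (plug C (Nd Be x y)) = Suc (tdeg l)" by (rule decomps_tdeg)
    then show "\<psi> (Nd d r (plug C (Nd Be x y))) = (-1) ^ (tdeg l * tdeg r) * (-1) ^ tdeg r * \<psi> (Nd d (plug C (Nd Be x y)) r)"
      using sw[of Hole d r "plug C (Nd Be x y)"] by (simp add: power_add mult_ac)
  qed
  have m: "(-1::'a) ^ tdeg r * (-1) ^ tdeg r = 1" by (rule m1sq)
  have e1: "(-1::'a) ^ (dg d + tdeg r) * ((-1) ^ (tdeg l * tdeg r) * (-1) ^ tdeg r * HS (\<lambda>t. \<psi> (Nd d t r)) l)
     = (-1) ^ (tdeg l * tdeg r) * ((-1) ^ dg d * HS (\<lambda>t. \<psi> (Nd d t r)) l) * ((-1) ^ tdeg r * (-1) ^ tdeg r)"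
    by (simp only: power_add mult_ac)
  have e2: "(-1::'a) ^ dg d * ((-1) ^ (tdeg l * tdeg r) * (-1) ^ tdeg l * HS (\<lambda>t. \<psi> (Nd d l t)) r)
     = (-1) ^ (tdeg l * tdeg r) * ((-1) ^ (dg d + tdeg l) * HS (\<lambda>t. \<psi> (Nd d l t)) r)"
    by (simp only: power_add mult_ac)
  have e3: "(if d = Mu then of_nat (length (leaves r) * length (leaves l)) * ((-1) ^ (tdeg l * tdeg r) * \<psi> (Nd Be l r)) else 0)
     = (-1) ^ (tdeg l * tdeg r) * (if d = Mu then of_nat (length (leaves l) * length (leaves r)) * \<psi> (Nd Be l r) else (0::'a))"
    by (simp add: mult_ac)
  show ?thesis unfolding HS_Nd a b c e1 e2 e3 m
    by (simp add: distrib_left)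
qed



definition alk :: "'a::field_char_0 \<Rightarrow> 'a \<Rightarrow> 'a \<Rightarrow> nat \<Rightarrow> 'a" where
  "alk a b d k = (if k = 3 then (a+b)*d else if k = 1 then a*(b+d) else (a+d)*b)"
definition bek :: "'a::field_char_0 \<Rightarrow> 'a \<Rightarrow> 'a \<Rightarrow> nat \<Rightarrow> 'a" where
  "bek a b d k = (if k = 3 then a*b else if k = 1 then b*d else a*d)"

definition NearF :: "'a::field_char_0 \<Rightarrow> 'a \<Rightarrow> 'a \<Rightarrow> (nat \<Rightarrow> dec \<Rightarrow> dec \<Rightarrow> 'a) \<Rightarrow> nat \<Rightarrow> dec \<Rightarrow> dec \<Rightarrow> 'a" where
  "NearF a b d V k u w = (if k \<in> {1,2,3} then
     (if u = Mu then - alk a b d k * V k Be w else 0) + (if w = Mu then bek a b d k * (-1) ^ dg u * V k u Be else 0)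
   else 0)"

lemma near_R3:
  assumes "V \<in> R3"
  shows "NearF a b d V \<in> R3"
proof -
  obtain a1 a2 j l1 l2 l3 where V: "V = r3v a1 a2 j l1 l2 l3" using assms unfolding R3_iff by blast
  have "NearF a b d V = r3v (NearF a b d V 3 Mu Mu) (- NearF a b d V 2 Mu Mu) 0
       (bek a b d 1 * j) (bek a b d 2 * j) (bek a b d 3 * j)"
  proof (intro ext)
    fix k :: nat and u w :: dec
    consider "k = 1" | "k = 2" | "k = 3" | "k \<notin> {1,2,3}" by blast
    then show "NearF a b d V k u w = r3v (NearF a b d V 3 Mu Mu) (- NearF a b d V 2 Mu Mu) 0
       (bek a b d 1 * j) (bek a b d 2 * j) (bek a b d 3 * j) k u w"
      by cases (cases u; cases w; simp add: NearF_def V r3v_def e3_def alk_def bek_def algebra_simps)+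
  qed
  then show ?thesis unfolding R3_iff by blast
qed

definition Gd :: "(tree \<Rightarrow> 'a::field_char_0) \<Rightarrow> bool" where
  "Gd \<phi> \<longleftrightarrow> (\<forall>C A B D. d2_local \<phi> C A B D \<in> R3)"

lemma d2_plug: "d2_local f C A B D = d2_local (\<lambda>s. f (plug C s)) Hole A B D"
  by (intro ext) (simp add: d2_local_def)

lemma Gd_plug: "Gd \<phi> \<Longrightarrow> d2_local (\<lambda>s. \<phi> (plug C s)) Hole A B D \<in> R3"
proof -
  assume "Gd \<phi>"
  then have "d2_local \<phi> C A B D \<in> R3" by (simp add: Gd_def)
  moreover have "d2_local \<phi> C A B D = d2_local (\<lambda>s. \<phi> (plug C s)) Hole A B D" by (rule d2_plug)
  ultimately show ?thesis by simp
qed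

lemma d2_comp: "d2_local (\<lambda>t. \<phi> (plug C t)) C' A B D = d2_local \<phi> (ccomp C C') A B D"
  by (intro ext) (simp add: d2_local_def plug_ccomp)

lemma Gd_comp: "Gd \<phi> \<Longrightarrow> Gd (\<lambda>t. \<phi> (plug C t))"
  unfolding Gd_def d2_comp by blast

lemma vr_add: "d2_local f Hole A B D \<in> R3 \<Longrightarrow> d2_local g Hole A B D \<in> R3 \<Longrightarrow> d2_local (\<lambda>s. f s + g s) Hole A B D \<in> R3"
proof -
  assume a: "d2_local f Hole A B D \<in> R3" "d2_local g Hole A B D \<in> R3"
  have "d2_local (\<lambda>s. f s + g s) Hole A B D = (\<lambda>k u w. d2_local f Hole A B D k u w + d2_local g Hole A B D k u w)"
    by (intro ext) (simp add: d2_local_def distrib_left)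
  then show ?thesis using R3_add[OF a] by simp
qed

lemma vr_scale: "d2_local f Hole A B D \<in> R3 \<Longrightarrow> d2_local (\<lambda>s. a * f s) Hole A B D \<in> R3"
proof -
  assume h: "d2_local f Hole A B D \<in> R3"
  have "d2_local (\<lambda>s. a * f s) Hole A B D = (\<lambda>k u w. a * d2_local f Hole A B D k u w)"
    by (intro ext) (simp add: d2_local_def mult.left_commute)
  then show ?thesis using R3_scale[OF h] by simp
qed

lemma vr_len: "d2_local f Hole A B D \<in> R3 \<Longrightarrow> d2_local (\<lambda>s. g (length (leaves s)) * f s) Hole A B D \<in> R3"
proof -
  assume h: "d2_local f Hole A B D \<in> R3"
  have "d2_local (\<lambda>s. g (length (leaves s)) * f s) Hole A B D
     = (\<lambda>k u w. g (length (leaves A) + length (leaves B) + length (leaves D)) * d2_local f Hole A B D k u w)"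
    by (intro ext) (simp add: d2_local_def mult.left_commute add_ac)
  then show ?thesis using R3_scale[OF h] by simp
qed

lemma vr_tdeg: "d2_local f Hole A B D \<in> R3 \<Longrightarrow> d2_local (\<lambda>s. (-1) ^ tdeg s * f s) Hole A B D \<in> R3"
proof -
  assume h: "d2_local f Hole A B D \<in> R3"
  have "d2_local (\<lambda>s. (-1) ^ tdeg s * f s) Hole A B D
     = (\<lambda>k u w. (-1) ^ (tdeg A + tdeg B + tdeg D) * ((-1) ^ (dg u + dg w) * d2_local f Hole A B D k u w))"
    by (intro ext) (simp add: d2_local_def power_add mult.left_commute mult.commute)
  then show ?thesis using R3_scale[OF R3_sigma[OF h]] by simp
qed

lemma d2_HS: "d2_local (\<lambda>s. HS (G s) r) Hole A B D k u w = HS (\<lambda>t. d2_local (\<lambda>s. G s t) Hole A B D k u w) r"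
  by (simp add: d2_local_def HS_scale HS_zero)

lemma vr_HS: "(\<And>t. d2_local (\<lambda>s. G s t) Hole A B D \<in> R3) \<Longrightarrow> d2_local (\<lambda>s. HS (G s) r) Hole A B D \<in> R3"
proof -
  assume h: "\<And>t. d2_local (\<lambda>s. G s t) Hole A B D \<in> R3"
  have "(\<lambda>k u w. HS (\<lambda>t. d2_local (\<lambda>s. G s t) Hole A B D k u w) r) \<in> R3"
    by (rule HS_vec) (use h in simp)
  then show ?thesis by (simp add: d2_HS[abs_def])
qed

lemma vr_zero: "d2_local (\<lambda>s. 0) Hole A B D \<in> R3"
proof -
  have "d2_local (\<lambda>s. 0::'a::field_char_0) Hole A B D = (\<lambda>k u w. 0)" by (intro ext) (simp add: d2_local_def)
  then show ?thesis using R3_zero by simp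
qed

lemma HC_vec: "Gd \<phi> \<Longrightarrow> d2_local (\<lambda>s. HC \<phi> C s) Hole A B D \<in> R3"
proof (induction C arbitrary: \<phi>)
  case Hole then show ?case using vr_zero by simp
next
  case (CL d C r)
  have eq: "(\<lambda>s. HC \<phi> (CL d C r) s) = (\<lambda>s. (if d = Mu then of_nat ((clv C + length (leaves s)) * length (leaves r)) else 0) * \<phi> (plug (CL Be C r) s)
     + ((-1) ^ dg d * HC (\<lambda>t. \<phi> (Nd d t r)) C s + (-1) ^ (dg d + ctdeg C) * ((-1) ^ tdeg s * HS (\<lambda>t. \<phi> (plug (CL d C t) s)) r)))"
    by (intro ext) (simp add: len_plug tdeg_plug power_add mult.assoc)
  have t1: "d2_local (\<lambda>s. (if d = Mu then of_nat ((clv C + length (leaves s)) * length (leaves r)) else 0) * \<phi> (plug (CL Be C r) s)) Hole A B D \<in> R3"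
    using vr_len[where g = "\<lambda>n. if d = Mu then of_nat ((clv C + n) * length (leaves r)) else 0", OF Gd_plug[OF CL.prems, of "CL Be C r"]]
    by simp
  have g2: "Gd (\<lambda>t. \<phi> (Nd d t r))" using Gd_comp[OF CL.prems, of "CL d Hole r"] by simp
  have t2: "d2_local (\<lambda>s. (-1) ^ dg d * HC (\<lambda>t. \<phi> (Nd d t r)) C s) Hole A B D \<in> R3"
    by (rule vr_scale, rule CL.IH[OF g2])
  have t3: "d2_local (\<lambda>s. (-1) ^ (dg d + ctdeg C) * ((-1) ^ tdeg s * HS (\<lambda>t. \<phi> (plug (CL d C t) s)) r)) Hole A B D \<in> R3"
    by (rule vr_scale, rule vr_tdeg, rule vr_HS, rule Gd_plug[OF CL.prems])
  show ?case unfolding eq by (rule vr_add[OF t1 vr_add[OF t2 t3]])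
next
  case (CR d l C)
  have eq: "(\<lambda>s. HC \<phi> (CR d l C) s) = (\<lambda>s. (if d = Mu then of_nat (length (leaves l) * (clv C + length (leaves s))) else 0) * \<phi> (plug (CR Be l C) s)
     + ((-1) ^ dg d * HS (\<lambda>t. \<phi> (plug (CR d t C) s)) l + (-1) ^ (dg d + tdeg l) * HC (\<lambda>t. \<phi> (Nd d l t)) C s))"
    by (intro ext) (simp add: len_plug tdeg_plug power_add mult.assoc)
  have t1: "d2_local (\<lambda>s. (if d = Mu then of_nat (length (leaves l) * (clv C + length (leaves s))) else 0) * \<phi> (plug (CR Be l C) s)) Hole A B D \<in> R3"
    using vr_len[where g = "\<lambda>n. if d = Mu then of_nat (length (leaves l) * (clv C + n)) else 0", OF Gd_plug[OF CR.prems, of "CR Be l C"]]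
    by simp
  have g2: "Gd (\<lambda>t. \<phi> (Nd d l t))" using Gd_comp[OF CR.prems, of "CR d l Hole"] by simp
  have t3: "d2_local (\<lambda>s. (-1) ^ (dg d + tdeg l) * HC (\<lambda>t. \<phi> (Nd d l t)) C s) Hole A B D \<in> R3"
    by (rule vr_scale, rule CR.IH[OF g2])
  have t2: "d2_local (\<lambda>s. (-1) ^ dg d * HS (\<lambda>t. \<phi> (plug (CR d t C) s)) l) Hole A B D \<in> R3"
    by (rule vr_scale, rule vr_HS, rule Gd_plug[OF CR.prems])
  show ?case unfolding eq by (rule vr_add[OF t1 vr_add[OF t2 t3]])
qed

lemma HS_tdeg: "HS (\<lambda>X. a * (-1) ^ (m * tdeg X) * f X) t = a * (-1) ^ (m * Suc (tdeg t)) * HS f t"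
proof -
  have "HS (\<lambda>X. a * (-1) ^ (m * tdeg X) * f X) t = HS (\<lambda>X. (a * (-1) ^ (m * Suc (tdeg t))) * f X) t"
    by (rule HS_cong) (simp add: decomps_tdeg)
  then show ?thesis by (simp add: HS_scale)
qed

lemma HS_tdeg2: "HS (\<lambda>X. a * (-1) ^ (tdeg X * m) * f X) t = a * (-1) ^ (Suc (tdeg t) * m) * HS f t"
  using HS_tdeg[of a m f t] by (simp add: mult.commute)

lemma HS_scale2: "HS (\<lambda>X. a * f X) t = a * HS f t" by (rule HS_scale)

lemma hole_eq1:
  fixes \<psi> :: "tree \<Rightarrow> 'a::field_char_0"
  shows "d2_local (HS \<psi>) Hole A B D 1 u w = NearF (of_nat (length (leaves A))) (of_nat (length (leaves B))) (of_nat (length (leaves D))) (d2_local \<psi> Hole A B D) 1 u w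
    + (-1) ^ (dg u + dg w) * HS (\<lambda>X. d2_local \<psi> Hole X B D 1 u w) A
    + (-1) ^ (dg u + dg w + tdeg A) * HS (\<lambda>X. d2_local \<psi> Hole A X D 1 u w) B
    + (-1) ^ (dg u + dg w + tdeg A + tdeg B) * HS (\<lambda>X. d2_local \<psi> Hole A B X 1 u w) D"
proof -
  have fa: "HS (\<lambda>X. d2_local \<psi> Hole X B D 1 u w) A = susp_sign u * (-1) ^ (dg w * Suc (tdeg A)) * HS (\<lambda>X. \<psi> (Nd u X (Nd w B D))) A"
  proof -
    have "(\<lambda>X. d2_local \<psi> Hole X B D 1 u w) = (\<lambda>X. susp_sign u * (-1) ^ (dg w * tdeg X) * \<psi> (Nd u X (Nd w B D)))"
      by (simp add: d2_local_def)
    then show ?thesis by (simp only: HS_tdeg)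
  qed
  have fb: "HS (\<lambda>X. d2_local \<psi> Hole A X D 1 u w) B = (susp_sign u * (-1) ^ (dg w * tdeg A)) * HS (\<lambda>X. \<psi> (Nd u A (Nd w X D))) B"
  proof -
    have "(\<lambda>X. d2_local \<psi> Hole A X D 1 u w) = (\<lambda>X. (susp_sign u * (-1) ^ (dg w * tdeg A)) * \<psi> (Nd u A (Nd w X D)))"
      by (simp add: d2_local_def)
    then show ?thesis by (simp only: HS_scale2)
  qed
  have fd: "HS (\<lambda>X. d2_local \<psi> Hole A B X 1 u w) D = (susp_sign u * (-1) ^ (dg w * tdeg A)) * HS (\<lambda>X. \<psi> (Nd u A (Nd w B X))) D"
  proof -
    have "(\<lambda>X. d2_local \<psi> Hole A B X 1 u w) = (\<lambda>X. (susp_sign u * (-1) ^ (dg w * tdeg A)) * \<psi> (Nd u A (Nd w B X)))"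
      by (simp add: d2_local_def)
    then show ?thesis by (simp only: HS_scale2)
  qed
  show ?thesis unfolding fa fb fd
    by (cases u; cases w; cases "even (tdeg A)"; cases "even (tdeg B)"; cases "even (tdeg D)")
       (simp_all add: d2_local_def HS_Nd NearF_def alk_def bek_def susp_sign_def minus_one_power_iff algebra_simps)
qed


lemma hole_eq2:
  fixes \<psi> :: "tree \<Rightarrow> 'a::field_char_0"
  shows "d2_local (HS \<psi>) Hole A B D 2 u w = NearF (of_nat (length (leaves A))) (of_nat (length (leaves B))) (of_nat (length (leaves D))) (d2_local \<psi> Hole A B D) 2 u w
    + (-1) ^ (dg u + dg w) * HS (\<lambda>X. d2_local \<psi> Hole X B D 2 u w) A
    + (-1) ^ (dg u + dg w + tdeg A) * HS (\<lambda>X. d2_local \<psi> Hole A X D 2 u w) B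
    + (-1) ^ (dg u + dg w + tdeg A + tdeg B) * HS (\<lambda>X. d2_local \<psi> Hole A B X 2 u w) D"
proof -
  have fa: "HS (\<lambda>X. d2_local \<psi> Hole X B D 2 u w) A = (susp_sign u * (-1) ^ (tdeg B * tdeg D)) * HS (\<lambda>X. \<psi> (Nd u (Nd w X D) B)) A"
  proof -
    have "(\<lambda>X. d2_local \<psi> Hole X B D 2 u w) = (\<lambda>X. (susp_sign u * (-1) ^ (tdeg B * tdeg D)) * \<psi> (Nd u (Nd w X D) B))"
      by (simp add: d2_local_def)
    then show ?thesis by (simp only: HS_scale2)
  qed
  have fb: "HS (\<lambda>X. d2_local \<psi> Hole A X D 2 u w) B = susp_sign u * (-1) ^ (Suc (tdeg B) * tdeg D) * HS (\<lambda>X. \<psi> (Nd u (Nd w A D) X)) B"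
  proof -
    have "(\<lambda>X. d2_local \<psi> Hole A X D 2 u w) = (\<lambda>X. susp_sign u * (-1) ^ (tdeg X * tdeg D) * \<psi> (Nd u (Nd w A D) X))"
      by (simp add: d2_local_def)
    then show ?thesis by (simp only: HS_tdeg2)
  qed
  have fd: "HS (\<lambda>X. d2_local \<psi> Hole A B X 2 u w) D = susp_sign u * (-1) ^ (tdeg B * Suc (tdeg D)) * HS (\<lambda>X. \<psi> (Nd u (Nd w A X) B)) D"
  proof -
    have "(\<lambda>X. d2_local \<psi> Hole A B X 2 u w) = (\<lambda>X. susp_sign u * (-1) ^ (tdeg B * tdeg X) * \<psi> (Nd u (Nd w A X) B))"
      by (simp add: d2_local_def)
    then show ?thesis by (simp only: HS_tdeg)
  qed
  show ?thesis unfolding fa fb fd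
    by (cases u; cases w; cases "even (tdeg A)"; cases "even (tdeg B)"; cases "even (tdeg D)")
       (simp_all add: d2_local_def HS_Nd NearF_def alk_def bek_def susp_sign_def minus_one_power_iff algebra_simps)
qed


lemma hole_eq3:
  fixes \<psi> :: "tree \<Rightarrow> 'a::field_char_0"
  shows "d2_local (HS \<psi>) Hole A B D 3 u w = NearF (of_nat (length (leaves A))) (of_nat (length (leaves B))) (of_nat (length (leaves D))) (d2_local \<psi> Hole A B D) 3 u w
    + (-1) ^ (dg u + dg w) * HS (\<lambda>X. d2_local \<psi> Hole X B D 3 u w) A
    + (-1) ^ (dg u + dg w + tdeg A) * HS (\<lambda>X. d2_local \<psi> Hole A X D 3 u w) B
    + (-1) ^ (dg u + dg w + tdeg A + tdeg B) * HS (\<lambda>X. d2_local \<psi> Hole A B X 3 u w) D"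
proof -
  have fa: "HS (\<lambda>X. d2_local \<psi> Hole X B D 3 u w) A = susp_sign u * HS (\<lambda>X. \<psi> (Nd u (Nd w X B) D)) A"
  proof -
    have "(\<lambda>X. d2_local \<psi> Hole X B D 3 u w) = (\<lambda>X. susp_sign u * \<psi> (Nd u (Nd w X B) D))"
      by (simp add: d2_local_def)
    then show ?thesis by (simp only: HS_scale2)
  qed
  have fb: "HS (\<lambda>X. d2_local \<psi> Hole A X D 3 u w) B = susp_sign u * HS (\<lambda>X. \<psi> (Nd u (Nd w A X) D)) B"
  proof -
    have "(\<lambda>X. d2_local \<psi> Hole A X D 3 u w) = (\<lambda>X. susp_sign u * \<psi> (Nd u (Nd w A X) D))"
      by (simp add: d2_local_def)
    then show ?thesis by (simp only: HS_scale2)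
  qed
  have fd: "HS (\<lambda>X. d2_local \<psi> Hole A B X 3 u w) D = susp_sign u * HS (\<lambda>X. \<psi> (Nd u (Nd w A B) X)) D"
  proof -
    have "(\<lambda>X. d2_local \<psi> Hole A B X 3 u w) = (\<lambda>X. susp_sign u * \<psi> (Nd u (Nd w A B) X))"
      by (simp add: d2_local_def)
    then show ?thesis by (simp only: HS_scale2)
  qed
  show ?thesis unfolding fa fb fd
    by (cases u; cases w; cases "even (tdeg A)"; cases "even (tdeg B)"; cases "even (tdeg D)")
       (simp_all add: d2_local_def HS_Nd NearF_def alk_def bek_def susp_sign_def minus_one_power_iff algebra_simps)
qed

lemma hole_eq:
  fixes \<psi> :: "tree \<Rightarrow> 'a::field_char_0"
  shows "d2_local (HS \<psi>) Hole A B D = (\<lambda>k u w. NearF (of_nat (length (leaves A))) (of_nat (length (leaves B))) (of_nat (length (leaves D))) (d2_local \<psi> Hole A B D) k u w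
    + (-1) ^ (dg u + dg w) * HS (\<lambda>X. d2_local \<psi> Hole X B D k u w) A
    + (-1) ^ (dg u + dg w + tdeg A) * HS (\<lambda>X. d2_local \<psi> Hole A X D k u w) B
    + (-1) ^ (dg u + dg w + tdeg A + tdeg B) * HS (\<lambda>X. d2_local \<psi> Hole A B X k u w) D)"
proof (intro ext)
  fix k :: nat and u w :: dec
  consider "k = 1" | "k = 2" | "k = 3" | "k \<notin> {1,2,3}" by blast
  then show "d2_local (HS \<psi>) Hole A B D k u w = NearF (of_nat (length (leaves A))) (of_nat (length (leaves B))) (of_nat (length (leaves D))) (d2_local \<psi> Hole A B D) k u w
    + (-1) ^ (dg u + dg w) * HS (\<lambda>X. d2_local \<psi> Hole X B D k u w) A
    + (-1) ^ (dg u + dg w + tdeg A) * HS (\<lambda>X. d2_local \<psi> Hole A X D k u w) B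
    + (-1) ^ (dg u + dg w + tdeg A + tdeg B) * HS (\<lambda>X. d2_local \<psi> Hole A B X k u w) D"
  proof cases
    case 1 then show ?thesis using hole_eq1 by simp
  next
    case 2 then show ?thesis using hole_eq2 by simp
  next
    case 3 then show ?thesis using hole_eq3 by simp
  next
    case 4
    then have z: "\<And>X Y Z. d2_local \<psi> Hole X Y Z k u w = 0" by (simp add: d2_local_def)
    have h0: "\<And>f t. (\<And>X. f X = (0::'a)) \<Longrightarrow> HS f t = 0" by (rule HS_zero)
    show ?thesis using 4 by (simp add: z h0 NearF_def d2_local_def)
  qed
qed

lemma hole_vec:
  assumes g: "Gd \<psi>"
  shows "d2_local (HS \<psi>) Hole A B D \<in> R3"
proof -
  have gv: "\<And>X Y Z. d2_local \<psi> Hole X Y Z \<in> R3" using g unfolding Gd_def by blast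
  have n: "NearF (of_nat (length (leaves A))) (of_nat (length (leaves B))) (of_nat (length (leaves D))) (d2_local \<psi> Hole A B D) \<in> R3"
    by (rule near_R3[OF gv])
  have fa: "(\<lambda>k u w. (-1) ^ (dg u + dg w) * HS (\<lambda>X. d2_local \<psi> Hole X B D k u w) A) \<in> R3"
    by (rule R3_sigma, rule HS_vec) (simp add: gv)
  have fb0: "(\<lambda>k u w. (-1) ^ tdeg A * ((-1) ^ (dg u + dg w) * HS (\<lambda>X. d2_local \<psi> Hole A X D k u w) B)) \<in> R3"
    by (rule R3_scale, rule R3_sigma, rule HS_vec) (simp add: gv)
  have fb: "(\<lambda>k u w. (-1) ^ (dg u + dg w + tdeg A) * HS (\<lambda>X. d2_local \<psi> Hole A X D k u w) B) \<in> R3"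
    using fb0 by (simp add: power_add mult_ac)
  have fd0: "(\<lambda>k u w. (-1) ^ (tdeg A + tdeg B) * ((-1) ^ (dg u + dg w) * HS (\<lambda>X. d2_local \<psi> Hole A B X k u w) D)) \<in> R3"
    by (rule R3_scale, rule R3_sigma, rule HS_vec) (simp add: gv)
  have fd: "(\<lambda>k u w. (-1) ^ (dg u + dg w + tdeg A + tdeg B) * HS (\<lambda>X. d2_local \<psi> Hole A B X k u w) D) \<in> R3"
    using fd0 by (simp add: power_add mult_ac)
  show ?thesis unfolding hole_eq
    by (rule R3_add[OF R3_add[OF R3_add[OF n fa] fb] fd])
qed


lemma SW_comp: "SW c \<Longrightarrow> SW (\<lambda>t. c (plug C t))"
  unfolding SW_def plug_ccomp by blast

theorem lemma2p5:
  fixes c :: "tree \<Rightarrow> 'a::field_char_0" and n :: nat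
  assumes "c \<in> Gdual n"
  shows "Hop c \<in> Gdual n"
proof -
  have cT: "c \<in> TcM n" and gd: "Gd c" using assms unfolding Gdual_def Gd_def by auto
  have z: "\<And>t. \<not> arity_tree n t \<Longrightarrow> c t = 0" using cT unfolding TcM_def by blast
  have sw: "SW c" using cT unfolding TcM_def SW_def by blast
  have hz: "Hop c t = 0" if nt: "\<not> arity_tree n t" for t
  proof -
    have "HS c t = HS (\<lambda>_. 0) t"
    proof (rule HS_cong)
      fix C l r assume m: "(C, Mu, l, r) \<in> set (decomps t)"
      have "leaves (plug C (Nd Be l r)) = leaves t"
        using decomps_mem[OF m] leaves_plug_dec[of C Be l r Mu] by simp
      then have "\<not> arity_tree n (plug C (Nd Be l r))" using nt unfolding arity_tree_def by simp
      then show "c (plug C (Nd Be l r)) = 0" by (rule z)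
    qed
    also have "\<dots> = 0" by (rule HS_zero) simp
    finally show ?thesis by (simp add: Hop_HS)
  qed
  have hsw: "Hop c (plug C (Nd d r l)) = (-1) ^ (tdeg l * tdeg r) * Hop c (plug C (Nd d l r))" for C d l r
  proof -
    have swc: "\<And>C d l r. c (plug C (Nd d r l)) = (-1) ^ (tdeg l * tdeg r) * c (plug C (Nd d l r))"
      using sw unfolding SW_def by blast
    have h1: "HC c C (Nd d r l) = (-1) ^ (tdeg l * tdeg r) * HC c C (Nd d l r)"
      by (rule HC_rel) (simp, simp, rule swc)
    have h2: "HS (\<lambda>t. c (plug C t)) (Nd d r l) = (-1) ^ (tdeg l * tdeg r) * HS (\<lambda>t. c (plug C t)) (Nd d l r)"
      by (rule HS_swap, rule SW_comp[OF sw])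
    have nv: "nverts (plug C (Nd d r l)) = nverts (plug C (Nd d l r))" by (simp add: nverts_plug)
    have alg: "\<And>k x p y z. (k * x + p * (k * y)) / z = k * ((x + p * y) / (z::'a))"
      by (simp add: distrib_left mult.left_commute add_divide_distrib)
    show ?thesis unfolding Hop_HS HS_plug h1 h2 nv by (rule alg)
  qed
  have hT: "Hop c \<in> TcM n" unfolding TcM_def using hz hsw by blast
  have hd: "d2_local (Hop c) C A B D \<in> R3" for C A B D
  proof -
    define Z :: 'a where "Z = of_nat (Suc (cnv C + Suc (Suc (nverts A + nverts B + nverts D))) choose 2)"
    have e1: "d2_local (Hop c) C A B D = (\<lambda>k u w. inverse Z * d2_local (HS c) C A B D k u w)"
      by (intro ext) (simp add: d2_local_def Hop_HS nverts_plug Z_def divide_inverse mult.left_commute mult.commute add_ac)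
    have e2: "d2_local (HS c) C A B D = d2_local (\<lambda>s. HC c C s + (-1) ^ pre_deg C * HS (\<lambda>t. c (plug C t)) s) Hole A B D"
      by (subst d2_plug) (simp add: HS_plug)
    have "d2_local (HS c) C A B D \<in> R3"
      unfolding e2 by (rule vr_add[OF HC_vec[OF gd] vr_scale[OF hole_vec[OF Gd_comp[OF gd]]]])
    then show ?thesis unfolding e1 by (rule R3_scale)
  qed
  show ?thesis unfolding Gdual_def using hT hd by blast
qed

end
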